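(* Suppose $\mathbb{E}Y^2<\infty$, the central mean subspace of $Y$ given $X$ exists, has dimension $d^*_{\rm CMS}$, and $B\in\mathbb{R}^{p\times d^*_{\rm CMS}}$ is a basis matrix of it. Then under squared loss with oracle representation $R^*=B^\top X$, $d^*(\mathcal{L})=d^*_{\rm CMS}$.
   Context: $X\in\mathbb{R}^p$, $Y\in\mathbb{R}$. A subspace $\mathcal{S}\subseteq\mathbb{R}^p$ is a mean dimension-reduction subspace if $\mathbb{E}(Y\mid X)=\mathbb{E}(Y\mid P_{\mathcal{S}}X)$ a.s.; the central mean subspace is the intersection of all such subspaces, assumed itself to be one, and $d^*_{\rm CMS}$ is its dimension (the minimal dimension of a mean dimension-reduction subspace). The oracle $R^*=B^\top X$ is zero-padded to $R\in\mathbb{R}^{d_{\max}}$, $d_{\max}\ge d^*_{\rm CMS}$. $\mathcal{G}$ = all measurable $g:\mathbb{R}^{d_{\max}}\to\mathbb{R}$ with $\mathbb{E}g(R)^2<\infty$; $\mathcal{G}_d=\{g\in\mathcal{G}:g(r)=g(r')\text{ whenever } r_{[d]}=r'_{[d]}\}$; $\mathcal{L}_d=\min_{g\in\mathcal{G}_d}\mathbb{E}(Y-g(R))^2$; $d^*(\mathcal{L})=\min\{0\le d\le d_{\max}:\mathcal{L}_d=\mathcal{L}_{d_{\max}}\}$. *)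

theory Defs
  imports "HOL-Probability.Probability"
begin

definition orth_proj :: "'b::euclidean_space set \<Rightarrow> 'b \<Rightarrow> 'b" where
  "orth_proj S x = (THE y. y \<in> S \<and> (\<forall>z\<in>S. (x - y) \<bullet> z = 0))"

definition mean_dr_subspace ::
  "'a measure \<Rightarrow> ('a \<Rightarrow> 'b::euclidean_space) \<Rightarrow> ('a \<Rightarrow> real) \<Rightarrow> 'b set \<Rightarrow> bool" where
  "mean_dr_subspace M X Y S \<longleftrightarrow> subspace S \<and>
     (AE \<omega> in M. real_cond_exp M (vimage_algebra (space M) X borel) Y \<omega> =
                 real_cond_exp M (vimage_algebra (space M) (\<lambda>\<omega>. orth_proj S (X \<omega>)) borel) Y \<omega>)"

definition central_mean_subspace ::
  "'a measure \<Rightarrow> ('a \<Rightarrow> 'b::euclidean_space) \<Rightarrow> ('a \<Rightarrow> real) \<Rightarrow> 'b set" where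
  "central_mean_subspace M X Y = \<Inter> {S. mean_dr_subspace M X Y S}"

text \<open>R^{d_max} is modelled as extensional functions on {..<dmax} with the product Borel sigma algebra.\<close>
abbreviation Rspace :: "nat \<Rightarrow> (nat \<Rightarrow> real) measure" where
  "Rspace dmax \<equiv> PiM {..<dmax} (\<lambda>_. borel)"

definition G_class ::
  "'a measure \<Rightarrow> ('a \<Rightarrow> nat \<Rightarrow> real) \<Rightarrow> nat \<Rightarrow> nat \<Rightarrow> ((nat \<Rightarrow> real) \<Rightarrow> real) set" where
  "G_class M R dmax d = {g. g \<in> borel_measurable (Rspace dmax) \<and>
      integrable M (\<lambda>\<omega>. (g (R \<omega>))\<^sup>2) \<and>
      (\<forall>r\<in>space (Rspace dmax). \<forall>r'\<in>space (Rspace dmax).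
          (\<forall>i<d. r i = r' i) \<longrightarrow> g r = g r')}"

text \<open>L_d = min over G_d of E(Y - g(R))^2 (the minimum is attained; written as Inf).\<close>
definition sq_loss ::
  "'a measure \<Rightarrow> ('a \<Rightarrow> real) \<Rightarrow> ('a \<Rightarrow> nat \<Rightarrow> real) \<Rightarrow> nat \<Rightarrow> nat \<Rightarrow> real" where
  "sq_loss M Y R dmax d = Inf ((\<lambda>g. \<integral>\<omega>. (Y \<omega> - g (R \<omega>))\<^sup>2 \<partial>M) ` G_class M R dmax d)"

definition d_star_L ::
  "'a measure \<Rightarrow> ('a \<Rightarrow> real) \<Rightarrow> ('a \<Rightarrow> nat \<Rightarrow> real) \<Rightarrow> nat \<Rightarrow> nat" where
  "d_star_L M Y R dmax = (LEAST d. d \<le> dmax \<and> sq_loss M Y R dmax d = sq_loss M Y R dmax dmax)"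

text \<open>Zero-padded oracle representation R = (B^T X, 0) in R^{dmax}; column i of B is b i.\<close>
definition oracle_rep ::
  "('a \<Rightarrow> 'b::euclidean_space) \<Rightarrow> (nat \<Rightarrow> 'b) \<Rightarrow> nat \<Rightarrow> nat \<Rightarrow> 'a \<Rightarrow> nat \<Rightarrow> real" where
  "oracle_rep X b d dmax \<omega> = (\<lambda>i\<in>{..<dmax}. if i < d then b i \<bullet> X \<omega> else 0)"

end

theory Submission
  imports Defs
begin



lemma orth_proj_eq:
  fixes S :: "'b::euclidean_space set"
  assumes "subspace S" "y \<in> S" "\<forall>z\<in>S. (x - y) \<bullet> z = 0"
  shows "orth_proj S x = y"
  unfolding orth_proj_def
proof (rule the_equality)
  show "y \<in> S \<and> (\<forall>z\<in>S. (x - y) \<bullet> z = 0)" using assms by auto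
next
  fix y' assume H: "y' \<in> S \<and> (\<forall>z\<in>S. (x - y') \<bullet> z = 0)"
  have w: "y - y' \<in> S" using assms H by (simp add: subspace_diff)
  have "(x - y') \<bullet> (y - y') = 0" "(x - y) \<bullet> (y - y') = 0" using H assms w by auto
  then have "(y - y') \<bullet> (y - y') = 0" by (simp add: inner_diff_left)
  then show "y' = y" by simp
qed

lemma proj_formula:
  fixes b :: "nat \<Rightarrow> 'b::euclidean_space"
  assumes I: "finite I" and inj: "inj_on b I"
  shows "\<exists>E c. finite E \<and> (\<forall>x. orth_proj (span (b ` I)) x = (\<Sum>e\<in>E. (\<Sum>i\<in>I. c e i * (b i \<bullet> x)) *\<^sub>R e))
           \<and> (\<forall>x. orth_proj (span (b ` I)) x \<in> span (b ` I))
           \<and> (\<forall>x. \<forall>z\<in>span (b ` I). (x - orth_proj (span (b ` I)) x) \<bullet> z = 0)"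
proof -
  define S where "S = span (b ` I)"
  have sub: "subspace S" unfolding S_def by (rule subspace_span)
  obtain E where E: "E \<subseteq> S" "pairwise orthogonal E" "\<And>x. x \<in> E \<Longrightarrow> norm x = 1"
    "independent E" "card E = dim S" "span E = S"
    by (rule orthonormal_basis_subspace[OF sub], blast)
  have fE: "finite E" using E(4) by (rule finiteI_independent)
  have "\<forall>e\<in>E. \<exists>u. e = (\<Sum>i\<in>I. u i *\<^sub>R b i)"
  proof
    fix e assume "e \<in> E"
    then have "e \<in> span (b ` I)" using E(1) S_def by auto
    then obtain u where u: "e = (\<Sum>v\<in>b ` I. u v *\<^sub>R v)"
      using span_finite[of "b ` I"] I by auto
    have "(\<Sum>v\<in>b ` I. u v *\<^sub>R v) = (\<Sum>i\<in>I. u (b i) *\<^sub>R b i)"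
      using sum.reindex[OF inj] by (simp add: o_def)
    then show "\<exists>u. e = (\<Sum>i\<in>I. u i *\<^sub>R b i)" using u by (intro exI[of _ "\<lambda>i. u (b i)"]) simp
  qed
  then obtain c where c: "\<And>e. e \<in> E \<Longrightarrow> e = (\<Sum>i\<in>I. c e i *\<^sub>R b i)" by metis
  have ex: "e \<bullet> x = (\<Sum>i\<in>I. c e i * (b i \<bullet> x))" if "e \<in> E" for e x
  proof -
    have "e \<bullet> x = (\<Sum>i\<in>I. c e i *\<^sub>R b i) \<bullet> x" using c[OF that] by simp
    also have "\<dots> = (\<Sum>i\<in>I. c e i * (b i \<bullet> x))" by (simp add: inner_sum_left)
    finally show ?thesis .
  qed
  define P where "P x = (\<Sum>e\<in>E. (e \<bullet> x) *\<^sub>R e)" for x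
  have PS: "P x \<in> S" for x
    unfolding P_def using E(1) sub
    by (intro subspace_sum subspace_scale) auto
  have orth1: "(x - P x) \<bullet> e' = 0" if "e' \<in> E" for x e'
  proof -
    have "P x \<bullet> e' = (\<Sum>e\<in>E. (e \<bullet> x) * (e \<bullet> e'))" unfolding P_def by (simp add: inner_sum_left)
    also have "\<dots> = (e' \<bullet> x) * (e' \<bullet> e')"
    proof (rule sum.remove[OF fE that, THEN trans])
      have "(\<Sum>e\<in>E - {e'}. (e \<bullet> x) * (e \<bullet> e')) = 0"
        using E(2) that by (intro sum.neutral) (auto simp: pairwise_def orthogonal_def)
      then show "(e' \<bullet> x) * (e' \<bullet> e') + (\<Sum>e\<in>E - {e'}. (e \<bullet> x) * (e \<bullet> e')) = (e' \<bullet> x) * (e' \<bullet> e')" by simp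
    qed
    also have "e' \<bullet> e' = 1" using E(3)[OF that] by (simp add: power2_norm_eq_inner[symmetric])
    finally have h: "P x \<bullet> e' = e' \<bullet> x" by simp
    show ?thesis using h by (simp add: inner_diff_left inner_commute[of x e'])
  qed
  have orth: "(x - P x) \<bullet> z = 0" if "z \<in> S" for x z
  proof -
    have "z \<in> span E" using that E(6) by simp
    then obtain u where "z = (\<Sum>v\<in>E. u v *\<^sub>R v)" using span_finite[OF fE] by auto
    then show ?thesis using orth1 by (simp add: inner_sum_right)
  qed
  have eq: "orth_proj S x = P x" for x
    using orth_proj_eq[OF sub PS] orth by blast
  have F: "orth_proj S x = (\<Sum>e\<in>E. (\<Sum>i\<in>I. c e i * (b i \<bullet> x)) *\<^sub>R e)" for x
    unfolding eq P_def using ex by (intro sum.cong) auto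
  have "finite E \<and> (\<forall>x. orth_proj S x = (\<Sum>e\<in>E. (\<Sum>i\<in>I. c e i * (b i \<bullet> x)) *\<^sub>R e))
           \<and> (\<forall>x. orth_proj S x \<in> S) \<and> (\<forall>x. \<forall>z\<in>S. (x - orth_proj S x) \<bullet> z = 0)"
    using fE F eq PS orth by simp
  then show ?thesis unfolding S_def by (rule exI[of _ E, OF exI[of _ c]])
qed


lemma DD_enn:
  fixes u :: "'a \<Rightarrow> ennreal"
  assumes f: "f \<in> \<Omega> \<rightarrow> space N" and u: "u \<in> borel_measurable (vimage_algebra \<Omega> f N)"
  shows "\<exists>g\<in>borel_measurable N. \<forall>\<omega>\<in>\<Omega>. u \<omega> = g (f \<omega>)"
  using u
proof (induction rule: borel_measurable_induct)
  case (cong u v)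
  then obtain g where g: "g \<in> borel_measurable N" "\<forall>\<omega>\<in>\<Omega>. v \<omega> = g (f \<omega>)" by blast
  have "\<forall>\<omega>\<in>\<Omega>. u \<omega> = g (f \<omega>)" using g(2) cong(3) by simp
  then show ?case using g(1) by blast
next
  case (set A)
  then obtain B where B: "B \<in> sets N" "A = f -` B \<inter> \<Omega>" using sets_vimage_algebra2[OF f] by auto
  have "\<forall>\<omega>\<in>\<Omega>. indicator A \<omega> = (indicator B (f \<omega>) :: ennreal)" using B(2) by (simp add: indicator_def)
  moreover have "indicator B \<in> borel_measurable N" using B(1) by simp
  ultimately show ?case by blast
next
  case (mult u c)
  then obtain g where g: "g \<in> borel_measurable N" "\<forall>\<omega>\<in>\<Omega>. u \<omega> = g (f \<omega>)" by blast
  show ?case by (rule bexI[where x="\<lambda>y. c * g y"]) (use g in simp_all)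
next
  case (add u v)
  from add obtain g1 where g1: "g1 \<in> borel_measurable N" "\<forall>\<omega>\<in>\<Omega>. u \<omega> = g1 (f \<omega>)" by blast
  from add obtain g2 where g2: "g2 \<in> borel_measurable N" "\<forall>\<omega>\<in>\<Omega>. v \<omega> = g2 (f \<omega>)" by blast
  show ?case by (rule bexI[where x="\<lambda>y. g2 y + g1 y"]) (use g1 g2 in simp_all)
next
  case (seq U)
  then have "\<forall>i. \<exists>g. g \<in> borel_measurable N \<and> (\<forall>\<omega>\<in>\<Omega>. U i \<omega> = g (f \<omega>))" by blast
  then obtain G where G: "\<And>i. G i \<in> borel_measurable N" "\<And>i. \<forall>\<omega>\<in>\<Omega>. U i \<omega> = G i (f \<omega>)"
    by metis
  have e: "\<And>\<omega>. (SUP i. U i) \<omega> = (SUP i. U i \<omega>)" by (rule SUP_apply)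
  show ?case
  proof (rule bexI[where x="\<lambda>y. SUP i. G i y"])
    show "\<forall>\<omega>\<in>\<Omega>. (SUP i. U i) \<omega> = (SUP i. G i (f \<omega>))" unfolding e using G(2) by simp
    show "(\<lambda>y. SUP i. G i y) \<in> borel_measurable N" using G(1) by simp
  qed
qed
lemma DD_real:
  fixes u :: "'a \<Rightarrow> real"
  assumes f: "f \<in> \<Omega> \<rightarrow> space N" and u: "u \<in> borel_measurable (vimage_algebra \<Omega> f N)"
  shows "\<exists>g\<in>borel_measurable N. \<forall>\<omega>\<in>\<Omega>. u \<omega> = g (f \<omega>)"
proof -
  have "(\<lambda>\<omega>. ennreal (u \<omega>)) \<in> borel_measurable (vimage_algebra \<Omega> f N)"
       "(\<lambda>\<omega>. ennreal (- u \<omega>)) \<in> borel_measurable (vimage_algebra \<Omega> f N)" using u by measurable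
  from DD_enn[OF f this(1)] DD_enn[OF f this(2)]
  obtain g1 g2 where g: "g1 \<in> borel_measurable N" "\<forall>\<omega>\<in>\<Omega>. ennreal (u \<omega>) = g1 (f \<omega>)"
    "g2 \<in> borel_measurable N" "\<forall>\<omega>\<in>\<Omega>. ennreal (- u \<omega>) = g2 (f \<omega>)" by metis
  have mx: "enn2real (ennreal x) = max x 0" for x :: real
    by (cases "x \<ge> 0") (auto simp: ennreal_neg)
  have "u \<omega> = enn2real (g1 (f \<omega>)) - enn2real (g2 (f \<omega>))" if "\<omega> \<in> \<Omega>" for \<omega>
  proof -
    have "g1 (f \<omega>) = ennreal (u \<omega>)" "g2 (f \<omega>) = ennreal (- u \<omega>)" using g(2,4) that by auto
    then show ?thesis by (simp add: mx)
  qed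
  then show ?thesis using g(1,3)
    by (intro bexI[where x="\<lambda>y. enn2real (g1 y) - enn2real (g2 y)"]) auto
qed


lemma L2_prod:
  fixes f g :: "'a \<Rightarrow> real"
  assumes "f \<in> borel_measurable M" "g \<in> borel_measurable M"
    "integrable M (\<lambda>x. (f x)\<^sup>2)" "integrable M (\<lambda>x. (g x)\<^sup>2)"
  shows "integrable M (\<lambda>x. f x * g x)"
proof (rule Bochner_Integration.integrable_bound[of _ "\<lambda>x. (f x)\<^sup>2 + (g x)\<^sup>2"])
  show "integrable M (\<lambda>x. (f x)\<^sup>2 + (g x)\<^sup>2)" using assms by auto
  show "(\<lambda>x. f x * g x) \<in> borel_measurable M" using assms by measurable
  have "\<bar>a * b\<bar> \<le> a\<^sup>2 + b\<^sup>2" for a b :: real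
  proof -
    have e: "(\<bar>a\<bar> - \<bar>b\<bar>)\<^sup>2 = a\<^sup>2 + b\<^sup>2 - 2*(\<bar>a\<bar>*\<bar>b\<bar>)" by (simp add: power2_diff power2_abs)
    have "0 \<le> (\<bar>a\<bar> - \<bar>b\<bar>)\<^sup>2" "0 \<le> \<bar>a\<bar>*\<bar>b\<bar>" by simp_all
    moreover have "0 \<le> a\<^sup>2" "0 \<le> b\<^sup>2" by simp_all
    ultimately show ?thesis using e unfolding abs_mult by linarith
  qed
  then show "AE x in M. norm (f x * g x) \<le> norm ((f x)\<^sup>2 + (g x)\<^sup>2)" by auto
qed

lemma L2_diff:
  fixes f g :: "'a \<Rightarrow> real"
  assumes "f \<in> borel_measurable M" "g \<in> borel_measurable M"
    "integrable M (\<lambda>x. (f x)\<^sup>2)" "integrable M (\<lambda>x. (g x)\<^sup>2)"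
  shows "integrable M (\<lambda>x. (f x - g x)\<^sup>2)"
proof -
  have "integrable M (\<lambda>x. (f x)\<^sup>2 + (g x)\<^sup>2 - 2 * (f x * g x))"
    using L2_prod[OF assms] assms by auto
  moreover have "(\<lambda>x. (f x)\<^sup>2 + (g x)\<^sup>2 - 2 * (f x * g x)) = (\<lambda>x. (f x - g x)\<^sup>2)"
    by (auto simp: power2_eq_square algebra_simps)
  ultimately show ?thesis by simp
qed

lemma pyth:
  fixes Y Z :: "'a \<Rightarrow> real"
  assumes sf: "sigma_finite_subalgebra M F"
    and Y: "Y \<in> borel_measurable M" "integrable M Y" "integrable M (\<lambda>x. (Y x)\<^sup>2)"
    and Z: "Z \<in> borel_measurable F" "integrable M (\<lambda>x. (Z x)\<^sup>2)"
  shows "integrable M (\<lambda>x. (real_cond_exp M F Y x)\<^sup>2)"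
    "(\<integral>x. (Y x - Z x)\<^sup>2 \<partial>M) = (\<integral>x. (Y x - real_cond_exp M F Y x)\<^sup>2 \<partial>M)
        + (\<integral>x. (real_cond_exp M F Y x - Z x)\<^sup>2 \<partial>M)"
proof -
  interpret sigma_finite_subalgebra M F by (rule sf)
  define c where "c = real_cond_exp M F Y"
  have cvx: "convex_on UNIV (\<lambda>x::real. x\<^sup>2)" using convex_power2 by simp
  have qm: "(\<lambda>x::real. x\<^sup>2) \<in> borel_measurable borel" by measurable
  have c2: "integrable M (\<lambda>x. (c x)\<^sup>2)" unfolding c_def
    by (rule integrable_convex_cond_exp[where I=UNIV and q="\<lambda>x. x\<^sup>2", OF Y(2) _ _ Y(3) cvx qm]) auto
  then show "integrable M (\<lambda>x. (real_cond_exp M F Y x)\<^sup>2)" by (simp add: c_def)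
  have cF: "c \<in> borel_measurable F" and cM: "c \<in> borel_measurable M" unfolding c_def by auto
  have ZM: "Z \<in> borel_measurable M" by (rule measurable_from_subalg[OF subalg Z(1)])
  have i1: "integrable M (\<lambda>x. (Y x - c x)\<^sup>2)" by (rule L2_diff[OF Y(1) cM Y(3) c2])
  have i2: "integrable M (\<lambda>x. (c x - Z x)\<^sup>2)" by (rule L2_diff[OF cM ZM c2 Z(2)])
  have cZm: "(\<lambda>x. c x - Z x) \<in> borel_measurable M" using cM ZM by measurable
  have cZF: "(\<lambda>x. c x - Z x) \<in> borel_measurable F" using cF Z(1) by measurable
  have i3: "integrable M (\<lambda>x. (c x - Z x) * Y x)" by (rule L2_prod[OF cZm Y(1) i2 Y(3)])
  have i4: "integrable M (\<lambda>x. (c x - Z x) * c x)" by (rule L2_prod[OF cZm cM i2 c2])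
  have key: "(\<integral>x. (c x - Z x) * c x \<partial>M) = (\<integral>x. (c x - Z x) * Y x \<partial>M)"
    unfolding c_def by (rule real_cond_exp_intg(2)[OF i3[unfolded c_def] cZF[unfolded c_def] Y(1)])
  have eq: "(\<lambda>x. (Y x - Z x)\<^sup>2) = (\<lambda>x. ((Y x - c x)\<^sup>2 + (c x - Z x)\<^sup>2) + 2 * ((c x - Z x) * Y x - (c x - Z x) * c x))"
    by (auto simp: power2_eq_square algebra_simps)
  have i5: "integrable M (\<lambda>x. (c x - Z x) * Y x - (c x - Z x) * c x)" using i3 i4 by (rule Bochner_Integration.integrable_diff)
  have "(\<integral>x. (Y x - Z x)\<^sup>2 \<partial>M) = (\<integral>x. ((Y x - c x)\<^sup>2 + (c x - Z x)\<^sup>2) \<partial>M)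
     + (\<integral>x. 2 * ((c x - Z x) * Y x - (c x - Z x) * c x) \<partial>M)"
    unfolding eq by (rule Bochner_Integration.integral_add[OF Bochner_Integration.integrable_add[OF i1 i2] integrable_mult_right[OF i5]])
  also have "(\<integral>x. ((Y x - c x)\<^sup>2 + (c x - Z x)\<^sup>2) \<partial>M) = (\<integral>x. (Y x - c x)\<^sup>2 \<partial>M) + (\<integral>x. (c x - Z x)\<^sup>2 \<partial>M)"
    by (rule Bochner_Integration.integral_add[OF i1 i2])
  also have "(\<integral>x. 2 * ((c x - Z x) * Y x - (c x - Z x) * c x) \<partial>M) = 2 * ((\<integral>x. (c x - Z x) * Y x \<partial>M) - (\<integral>x. (c x - Z x) * c x \<partial>M))"
    by (simp only: integral_mult_right_zero Bochner_Integration.integral_diff[OF i3 i4])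
  finally show "(\<integral>x. (Y x - Z x)\<^sup>2 \<partial>M) = (\<integral>x. (Y x - real_cond_exp M F Y x)\<^sup>2 \<partial>M)
        + (\<integral>x. (real_cond_exp M F Y x - Z x)\<^sup>2 \<partial>M)" using key by (simp add: c_def)
qed

lemma sfs_vimage:
  assumes "prob_space M" "f \<in> measurable M N"
  shows "sigma_finite_subalgebra M (vimage_algebra (space M) f N)"
proof -
  interpret prob_space M by fact
  have "finite_measure_subalgebra M (vimage_algebra (space M) f N)"
    unfolding finite_measure_subalgebra_def finite_measure_subalgebra_axioms_def subalgebra_def
    using sets_image_in_sets[OF refl assms(2)] finite_measure_axioms by auto
  then show ?thesis by (rule finite_measure_subalgebra_is_sigma_finite)
qed



theorem propositionB2:
  fixes M :: "'a measure" and X :: "'a \<Rightarrow> 'b::euclidean_space" and Y :: "'a \<Rightarrow> real"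
    and b :: "nat \<Rightarrow> 'b" and dmax :: nat
  assumes "prob_space M"
    and "X \<in> borel_measurable M" and "Y \<in> borel_measurable M"
    and "integrable M (\<lambda>\<omega>. (Y \<omega>)\<^sup>2)"
    and "mean_dr_subspace M X Y (central_mean_subspace M X Y)"
    and "inj_on b {..<dim (central_mean_subspace M X Y)}"
    and "independent (b ` {..<dim (central_mean_subspace M X Y)})"
    and "span (b ` {..<dim (central_mean_subspace M X Y)}) = central_mean_subspace M X Y"
    and "dim (central_mean_subspace M X Y) \<le> dmax"
  shows "d_star_L M Y (oracle_rep X b (dim (central_mean_subspace M X Y)) dmax) dmax
           = dim (central_mean_subspace M X Y)"
proof -
  interpret P: prob_space M by fact
  define S where "S = central_mean_subspace M X Y"
  define d where "d = dim S"
  define R where "R = oracle_rep X b d dmax"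
  have dle: "d \<le> dmax" using assms(9) unfolding d_def S_def .
  have spanS: "span (b ` {..<d}) = S" using assms(8) unfolding d_def S_def .
  have injb: "inj_on b {..<d}" using assms(6) unfolding d_def S_def .
  have mdrS: "mean_dr_subspace M X Y S" using assms(5) unfolding S_def .
  have Xm[measurable]: "X \<in> borel_measurable M" by fact
  have Ym[measurable]: "Y \<in> borel_measurable M" by fact
  have Y2: "integrable M (\<lambda>\<omega>. (Y \<omega>)\<^sup>2)" by fact
  have Yint: "integrable M Y"
    by (rule finite_measure.square_integrable_imp_integrable[OF P.finite_measure_axioms Ym Y2])
  have Rsp: "R \<omega> \<in> space (Rspace dmax)" for \<omega>
    by (simp add: R_def oracle_rep_def space_PiM)
  have Rm: "R \<in> M \<rightarrow>\<^sub>M Rspace dmax"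
    unfolding R_def oracle_rep_def
  proof (intro measurable_restrict)
    fix i assume "i \<in> {..<dmax}"
    show "(\<lambda>\<omega>. if i < d then b i \<bullet> X \<omega> else 0) \<in> M \<rightarrow>\<^sub>M borel"
      by (cases "i < d") simp_all
  qed
  have Rc: "R \<omega> i = b i \<bullet> X \<omega>" if "i < d" for \<omega> i
    using that dle by (simp add: R_def oracle_rep_def)
  define loss where "loss g = (\<integral>\<omega>. (Y \<omega> - g (R \<omega>))\<^sup>2 \<partial>M)" for g :: "(nat \<Rightarrow> real) \<Rightarrow> real"
  have sqdef: "sq_loss M Y R dmax j = Inf (loss ` G_class M R dmax j)" for j
    by (simp add: sq_loss_def loss_def)
  have zeroG: "(\<lambda>_. 0) \<in> G_class M R dmax j" for j
    by (simp add: G_class_def)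
  have bdd: "bdd_below (loss ` G_class M R dmax j)" for j
    unfolding loss_def by (intro bdd_belowI[of _ 0]) auto
  have extEq: "r = r'" if "r \<in> space (Rspace dmax)" "r' \<in> space (Rspace dmax)" "\<forall>i<dmax. r i = r' i" for r r'
  proof
    fix i show "r i = r' i"
      using that PiE_arb[of r "{..<dmax}" "\<lambda>_. UNIV" i] PiE_arb[of r' "{..<dmax}" "\<lambda>_. UNIV" i]
      by (cases "i < dmax") (auto simp: space_PiM)
  qed

  have Ld: "sq_loss M Y R dmax d = sq_loss M Y R dmax dmax"
  proof -
    have "loss ` G_class M R dmax d = loss ` G_class M R dmax dmax"
    proof
      have "G_class M R dmax d \<subseteq> G_class M R dmax dmax"
      proof
        fix g assume g: "g \<in> G_class M R dmax d"
        have "\<forall>r\<in>space (Rspace dmax). \<forall>r'\<in>space (Rspace dmax). (\<forall>i<dmax. r i = r' i) \<longrightarrow> g r = g r'"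
          using extEq by blast
        then show "g \<in> G_class M R dmax dmax" using g unfolding G_class_def by blast
      qed
      then show "loss ` G_class M R dmax d \<subseteq> loss ` G_class M R dmax dmax" by (rule image_mono)
    next
      show "loss ` G_class M R dmax dmax \<subseteq> loss ` G_class M R dmax d"
      proof
        fix v assume "v \<in> loss ` G_class M R dmax dmax"
        then obtain g where g: "g \<in> G_class M R dmax dmax" and v: "v = loss g" by blast
        have gm: "g \<in> borel_measurable (Rspace dmax)" and gi: "integrable M (\<lambda>\<omega>. (g (R \<omega>))\<^sup>2)"
          using g unfolding G_class_def by auto
        define \<pi> where "\<pi> r = (\<lambda>i\<in>{..<dmax}. if i < d then r i else (0::real))" for r :: "nat \<Rightarrow> real"
        have \<pi>m: "\<pi> \<in> Rspace dmax \<rightarrow>\<^sub>M Rspace dmax"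
          unfolding \<pi>_def
        proof (intro measurable_restrict)
          fix i :: nat assume i: "i \<in> {..<dmax}"
          show "(\<lambda>r. if i < d then r i else 0) \<in> Rspace dmax \<rightarrow>\<^sub>M borel"
            using measurable_component_singleton[OF i, of "\<lambda>_. borel"] by (cases "i < d") simp_all
        qed
        have \<pi>R: "\<pi> (R \<omega>) = R \<omega>" for \<omega>
          by (auto simp: \<pi>_def R_def oracle_rep_def fun_eq_iff)
        have "(\<lambda>r. g (\<pi> r)) \<in> G_class M R dmax d"
          unfolding G_class_def
        proof (intro CollectI conjI ballI impI)
          show "(\<lambda>r. g (\<pi> r)) \<in> borel_measurable (Rspace dmax)" by (rule measurable_compose[OF \<pi>m gm])
          show "integrable M (\<lambda>\<omega>. (g (\<pi> (R \<omega>)))\<^sup>2)" using gi by (simp add: \<pi>R)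
          fix r r' :: "nat \<Rightarrow> real" assume "\<forall>i<d. r i = r' i"
          then have "\<pi> r = \<pi> r'" by (auto simp: \<pi>_def fun_eq_iff)
          then show "g (\<pi> r) = g (\<pi> r')" by simp
        qed
        moreover have "loss (\<lambda>r. g (\<pi> r)) = loss g" by (simp add: loss_def \<pi>R)
        ultimately show "v \<in> loss ` G_class M R dmax d" using v by (metis image_eqI)
      qed
    qed
    then show ?thesis by (simp add: sqdef)
  qed

  have notk: "sq_loss M Y R dmax k \<noteq> sq_loss M Y R dmax dmax" if kd: "k < d" for k
  proof
    assume eqL: "sq_loss M Y R dmax k = sq_loss M Y R dmax dmax"
    define S' where "S' = span (b ` {..<k})"
    have injk: "inj_on b {..<k}" by (rule inj_on_subset[OF injb]) (use kd in auto)
    from proj_formula[OF finite_lessThan injb] obtain E c where E0: "finite E"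
      "\<forall>x. orth_proj S x = (\<Sum>e\<in>E. (\<Sum>i\<in>{..<d}. c e i * (b i \<bullet> x)) *\<^sub>R e)"
      "\<forall>x. orth_proj S x \<in> S" "\<forall>x. \<forall>z\<in>S. (x - orth_proj S x) \<bullet> z = 0"
      unfolding spanS by blast
    have E: "finite E"
      "\<And>x. orth_proj S x = (\<Sum>e\<in>E. (\<Sum>i\<in>{..<d}. c e i * (b i \<bullet> x)) *\<^sub>R e)"
      "\<And>x. orth_proj S x \<in> S" "\<And>x z. z \<in> S \<Longrightarrow> (x - orth_proj S x) \<bullet> z = 0"
      using E0 by auto
    from proj_formula[OF finite_lessThan injk] obtain E' c' where E0': "finite E'"
      "\<forall>x. orth_proj S' x = (\<Sum>e\<in>E'. (\<Sum>i\<in>{..<k}. c' e i * (b i \<bullet> x)) *\<^sub>R e)"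
      "\<forall>x. orth_proj S' x \<in> S'" "\<forall>x. \<forall>z\<in>S'. (x - orth_proj S' x) \<bullet> z = 0"
      unfolding S'_def[symmetric] by blast
    have E': "finite E'"
      "\<And>x. orth_proj S' x = (\<Sum>e\<in>E'. (\<Sum>i\<in>{..<k}. c' e i * (b i \<bullet> x)) *\<^sub>R e)"
      "\<And>x. orth_proj S' x \<in> S'" "\<And>x z. z \<in> S' \<Longrightarrow> (x - orth_proj S' x) \<bullet> z = 0"
      using E0' by auto
    have bS: "b i \<in> S" if "i < d" for i using that spanS span_base[of "b i" "b ` {..<d}"] by auto
    have bS': "b i \<in> S'" if "i < k" for i using that span_base[of "b i" "b ` {..<k}"] by (auto simp: S'_def)
    have PSm: "orth_proj S \<in> borel_measurable borel"
    proof -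
      have "orth_proj S = (\<lambda>x. \<Sum>e\<in>E. (\<Sum>i\<in>{..<d}. c e i * (b i \<bullet> x)) *\<^sub>R e)" using E(2) by auto
      also have "\<dots> \<in> borel_measurable borel"
        by (intro borel_measurable_continuous_onI continuous_intros)
      finally show ?thesis .
    qed
    have PS'm: "orth_proj S' \<in> borel_measurable borel"
    proof -
      have "orth_proj S' = (\<lambda>x. \<Sum>e\<in>E'. (\<Sum>i\<in>{..<k}. c' e i * (b i \<bullet> x)) *\<^sub>R e)" using E'(2) by auto
      also have "\<dots> \<in> borel_measurable borel"
        by (intro borel_measurable_continuous_onI continuous_intros)
      finally show ?thesis .
    qed
    define FX where "FX = vimage_algebra (space M) X borel"
    define FS where "FS = vimage_algebra (space M) (\<lambda>\<omega>. orth_proj S (X \<omega>)) borel"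
    define FS' where "FS' = vimage_algebra (space M) (\<lambda>\<omega>. orth_proj S' (X \<omega>)) borel"
    have PSXm: "(\<lambda>\<omega>. orth_proj S (X \<omega>)) \<in> M \<rightarrow>\<^sub>M borel" by (rule measurable_compose[OF Xm PSm])
    have PS'Xm: "(\<lambda>\<omega>. orth_proj S' (X \<omega>)) \<in> M \<rightarrow>\<^sub>M borel" by (rule measurable_compose[OF Xm PS'm])
    have sfS: "sigma_finite_subalgebra M FS" unfolding FS_def by (rule sfs_vimage[OF assms(1) PSXm])
    have sfS': "sigma_finite_subalgebra M FS'" unfolding FS'_def by (rule sfs_vimage[OF assms(1) PS'Xm])
    define h where "h = real_cond_exp M FS Y"
    define h' where "h' = real_cond_exp M FS' Y"
    have hFS: "h \<in> borel_measurable FS" unfolding h_def by (rule borel_measurable_cond_exp)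
    have h'FS': "h' \<in> borel_measurable FS'" unfolding h'_def by (rule borel_measurable_cond_exp)
    have h2: "integrable M (\<lambda>\<omega>. (h \<omega>)\<^sup>2)" unfolding h_def
      by (rule pyth(1)[OF sfS Ym Yint Y2, of "\<lambda>_. 0"]) simp_all
    have h'2: "integrable M (\<lambda>\<omega>. (h' \<omega>)\<^sup>2)" unfolding h'_def
      by (rule pyth(1)[OF sfS' Ym Yint Y2, of "\<lambda>_. 0"]) simp_all

    have up: "sq_loss M Y R dmax dmax \<le> (\<integral>\<omega>. (Y \<omega> - h \<omega>)\<^sup>2 \<partial>M)"
    proof -
      have fsp: "(\<lambda>\<omega>. orth_proj S (X \<omega>)) \<in> space M \<rightarrow> space borel" by simp
      obtain g0 where g0: "g0 \<in> borel_measurable borel" "\<forall>\<omega>\<in>space M. h \<omega> = g0 (orth_proj S (X \<omega>))"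
        using DD_real[OF fsp hFS[unfolded FS_def]] by blast
      define Lm where "Lm r = (\<Sum>e\<in>E. (\<Sum>i\<in>{..<d}. c e i * r i) *\<^sub>R e)" for r :: "nat \<Rightarrow> real"
      have LmR: "Lm (R \<omega>) = orth_proj S (X \<omega>)" for \<omega>
        unfolding Lm_def E(2) using Rc by (intro sum.cong refl) simp
      have ci: "(\<lambda>r. r i) \<in> Rspace dmax \<rightarrow>\<^sub>M borel" if "i \<in> {..<d}" for i
        using that dle by (intro measurable_component_singleton) auto
      have Lmm: "Lm \<in> Rspace dmax \<rightarrow>\<^sub>M borel"
        unfolding Lm_def
        by (intro borel_measurable_sum borel_measurable_scaleR borel_measurable_times borel_measurable_const ci)
      define g where "g r = g0 (Lm r)" for r
      have gR: "g (R \<omega>) = h \<omega>" if "\<omega> \<in> space M" for \<omega>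
        using g0(2) that by (simp add: g_def LmR)
      have gG: "g \<in> G_class M R dmax dmax"
        unfolding G_class_def
      proof (intro CollectI conjI ballI impI)
        show "g \<in> borel_measurable (Rspace dmax)" unfolding g_def by (rule measurable_compose[OF Lmm g0(1)])
        have "integrable M (\<lambda>\<omega>. (g (R \<omega>))\<^sup>2) = integrable M (\<lambda>\<omega>. (h \<omega>)\<^sup>2)"
          by (rule Bochner_Integration.integrable_cong) (simp_all add: gR)
        then show "integrable M (\<lambda>\<omega>. (g (R \<omega>))\<^sup>2)" using h2 by simp
        fix r r' assume "r \<in> space (Rspace dmax)" "r' \<in> space (Rspace dmax)" "\<forall>i<dmax. r i = r' i"
        then have "r = r'" by (rule extEq)
        then show "g r = g r'" by simp
      qed
      have "loss g = (\<integral>\<omega>. (Y \<omega> - h \<omega>)\<^sup>2 \<partial>M)"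
        unfolding loss_def by (rule Bochner_Integration.integral_cong) (simp_all add: gR)
      then show ?thesis using cInf_lower[OF imageI[OF gG] bdd] sqdef by simp
    qed

    have low: "(\<integral>\<omega>. (Y \<omega> - h' \<omega>)\<^sup>2 \<partial>M) \<le> sq_loss M Y R dmax k"
      unfolding sqdef
    proof (rule cInf_greatest)
      show "loss ` G_class M R dmax k \<noteq> {}" using zeroG by blast
      fix v assume "v \<in> loss ` G_class M R dmax k"
      then obtain g where g: "g \<in> G_class M R dmax k" and v: "v = loss g" by blast
      have gm: "g \<in> borel_measurable (Rspace dmax)" and gi: "integrable M (\<lambda>\<omega>. (g (R \<omega>))\<^sup>2)"
        and gk: "\<And>r r'. r \<in> space (Rspace dmax) \<Longrightarrow> r' \<in> space (Rspace dmax) \<Longrightarrow> (\<forall>i<k. r i = r' i) \<Longrightarrow> g r = g r'"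
        using g unfolding G_class_def by blast+
      define \<psi> where "\<psi> y = (\<lambda>i\<in>{..<dmax}. if i < k then b i \<bullet> y else (0::real))" for y :: 'b
      have \<psi>m: "\<psi> \<in> borel \<rightarrow>\<^sub>M Rspace dmax"
        unfolding \<psi>_def
      proof (intro measurable_restrict)
        fix i :: nat assume i: "i \<in> {..<dmax}"
        have "(\<lambda>y::'b. b i \<bullet> y) \<in> borel_measurable borel"
          by (intro borel_measurable_continuous_onI continuous_intros)
        then show "(\<lambda>y::'b. if i < k then b i \<bullet> y else 0) \<in> borel \<rightarrow>\<^sub>M borel"
          by (cases "i < k") simp_all
      qed
      have \<psi>sp: "\<psi> y \<in> space (Rspace dmax)" for y by (simp add: \<psi>_def space_PiM)
      have ZR: "g (R \<omega>) = g (\<psi> (orth_proj S' (X \<omega>)))" for \<omega>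
      proof (rule gk[OF Rsp \<psi>sp], intro allI impI)
        fix i assume ik: "i < k"
        have "(X \<omega> - orth_proj S' (X \<omega>)) \<bullet> b i = 0" using E'(4)[OF bS'[OF ik]] .
        then have "b i \<bullet> orth_proj S' (X \<omega>) = b i \<bullet> X \<omega>"
          using inner_diff_left[of "X \<omega>" "orth_proj S' (X \<omega>)" "b i"]
            inner_commute[of "X \<omega>" "b i"] inner_commute[of "orth_proj S' (X \<omega>)" "b i"] by linarith
        then show "R \<omega> i = \<psi> (orth_proj S' (X \<omega>)) i"
          using ik kd dle Rc[of i \<omega>] by (simp add: \<psi>_def)
      qed
      have ZF: "(\<lambda>\<omega>. g (R \<omega>)) \<in> borel_measurable FS'"
      proof -
        have m1: "(\<lambda>\<omega>. orth_proj S' (X \<omega>)) \<in> FS' \<rightarrow>\<^sub>M borel"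
          unfolding FS'_def by (rule measurable_vimage_algebra1) simp
        have "(\<lambda>\<omega>. g (\<psi> (orth_proj S' (X \<omega>)))) \<in> borel_measurable FS'"
          by (rule measurable_compose[OF m1 measurable_compose[OF \<psi>m gm]])
        then show ?thesis by (simp add: ZR)
      qed
      have "loss g = (\<integral>\<omega>. (Y \<omega> - h' \<omega>)\<^sup>2 \<partial>M) + (\<integral>\<omega>. (h' \<omega> - g (R \<omega>))\<^sup>2 \<partial>M)"
        unfolding loss_def h'_def by (rule pyth(2)[OF sfS' Ym Yint Y2 ZF gi])
      moreover have "0 \<le> (\<integral>\<omega>. (h' \<omega> - g (R \<omega>))\<^sup>2 \<partial>M)" by simp
      ultimately show "(\<integral>\<omega>. (Y \<omega> - h' \<omega>)\<^sup>2 \<partial>M) \<le> v" using v by simp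
    qed

    have h'FS: "h' \<in> borel_measurable FS"
    proof -
      have eqP: "orth_proj S' (orth_proj S x) = orth_proj S' x" for x
      proof -
        have "b i \<bullet> orth_proj S x = b i \<bullet> x" if "i < k" for i
        proof -
          have "(x - orth_proj S x) \<bullet> b i = 0" using E(4)[OF bS] that kd by simp
          then show ?thesis
            using inner_diff_left[of x "orth_proj S x" "b i"]
              inner_commute[of x "b i"] inner_commute[of "orth_proj S x" "b i"] by linarith
        qed
        then show ?thesis unfolding E'(2) by (intro sum.cong refl) simp
      qed
      have m1: "(\<lambda>\<omega>. orth_proj S (X \<omega>)) \<in> FS \<rightarrow>\<^sub>M borel"
        unfolding FS_def by (rule measurable_vimage_algebra1) simp
      have "(\<lambda>\<omega>. orth_proj S' (orth_proj S (X \<omega>))) \<in> FS \<rightarrow>\<^sub>M borel"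
        by (rule measurable_compose[OF m1 PS'm])
      then have m2: "(\<lambda>\<omega>. orth_proj S' (X \<omega>)) \<in> FS \<rightarrow>\<^sub>M borel" by (simp add: eqP)
      have idm: "(\<lambda>\<omega>. \<omega>) \<in> FS \<rightarrow>\<^sub>M FS'"
        unfolding FS'_def by (rule measurable_vimage_algebra2) (use m2 in \<open>simp_all add: FS_def\<close>)
      show ?thesis by (rule measurable_compose[OF idm h'FS'])
    qed
    have P2: "(\<integral>\<omega>. (Y \<omega> - h' \<omega>)\<^sup>2 \<partial>M) = (\<integral>\<omega>. (Y \<omega> - h \<omega>)\<^sup>2 \<partial>M) + (\<integral>\<omega>. (h \<omega> - h' \<omega>)\<^sup>2 \<partial>M)"
      unfolding h_def by (rule pyth(2)[OF sfS Ym Yint Y2 h'FS h'2])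
    have hhm: "h \<in> borel_measurable M" unfolding h_def by simp
    have h'm: "h' \<in> borel_measurable M" unfolding h'_def by simp
    have idiff: "integrable M (\<lambda>\<omega>. (h \<omega> - h' \<omega>)\<^sup>2)" by (rule L2_diff[OF hhm h'm h2 h'2])
    have "(\<integral>\<omega>. (h \<omega> - h' \<omega>)\<^sup>2 \<partial>M) \<le> 0" using up low eqL P2 by simp
    moreover have "0 \<le> (\<integral>\<omega>. (h \<omega> - h' \<omega>)\<^sup>2 \<partial>M)" by simp
    ultimately have "(\<integral>\<omega>. (h \<omega> - h' \<omega>)\<^sup>2 \<partial>M) = 0" by simp
    then have "AE \<omega> in M. (h \<omega> - h' \<omega>)\<^sup>2 = 0"
      using integral_nonneg_eq_0_iff_AE[OF idiff] by simp
    then have AE1: "AE \<omega> in M. h \<omega> = h' \<omega>" by eventually_elim simp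
    have AE2: "AE \<omega> in M. real_cond_exp M FX Y \<omega> = h \<omega>"
      using mdrS unfolding mean_dr_subspace_def FX_def h_def FS_def by blast
    have mdr': "mean_dr_subspace M X Y S'"
      unfolding mean_dr_subspace_def
    proof
      show "subspace S'" unfolding S'_def by (rule subspace_span)
      show "AE \<omega> in M. real_cond_exp M (vimage_algebra (space M) X borel) Y \<omega> =
                 real_cond_exp M (vimage_algebra (space M) (\<lambda>\<omega>. orth_proj S' (X \<omega>)) borel) Y \<omega>"
        using AE1 AE2 unfolding FX_def h'_def FS'_def by eventually_elim simp
    qed
    have "S \<subseteq> S'" unfolding S_def central_mean_subspace_def using mdr' by blast
    then have "S \<subseteq> span (b ` {..<k})" by (simp add: S'_def)
    then have "d \<le> card (b ` {..<k})" unfolding d_def by (rule dim_le_card) simp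
    also have "\<dots> \<le> k" using card_image_le[of "{..<k}" b] by simp
    finally show False using kd by simp
  qed

  have "d_star_L M Y R dmax = d"
    unfolding d_star_L_def
  proof (rule Least_equality)
    show "d \<le> dmax \<and> sq_loss M Y R dmax d = sq_loss M Y R dmax dmax" using dle Ld by simp
    fix k assume "k \<le> dmax \<and> sq_loss M Y R dmax k = sq_loss M Y R dmax dmax"
    then show "d \<le> k" using notk by (meson not_le)
  qed
  then show ?thesis unfolding R_def d_def S_def .
qed
end
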